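(* Let $G$ be an abelian group, let $n\geq 1$, let $X\subseteq G$ be a finite, nonempty subset, let $\mathscr A=A_1\cdot\ldots\cdot A_n$ be a setpartition over $G$, let $H=\mathsf H(X+\sum_{i=1}^{n}A_i)$ and let $Z=\bigcap_{i=1}^n(A_i+H)$. Suppose $\sum_{i=1}^{n}|A_i|\leq 2n$, $|A_i\setminus Z|\leq 1$ for all $i\in [1,n]$, and $|X+\sum_{i=1}^{n}A_i|< |X+H|+\big(\sum_{i=1}^{n}|A_i|-n\big)|H|$. Then $H$ is nontrivial and $Z=\alpha+H$ for some $\alpha\in G$.
   Context: A setpartition over $G$ is a finite unordered list $\mathscr A=A_1\cdot\ldots\cdot A_n$ of finite nonempty subsets of $G$. $\mathsf H(A)=\{g\in G:g+A=A\}$ is the stabilizer. Sumsets $A_1+\dots+A_n=\{a_1+\dots+a_n:a_i\in A_i\}$. *)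

theory Defs
  imports Main
begin

definition sumset :: "'a::ab_group_add set \<Rightarrow> 'a set \<Rightarrow> 'a set" where
  "sumset A B = {a + b | a b. a \<in> A \<and> b \<in> B}"

definition sumset_fam :: "(nat \<Rightarrow> 'a::ab_group_add set) \<Rightarrow> nat set \<Rightarrow> 'a set" where
  "sumset_fam A I = {(\<Sum>i\<in>I. f i) | f. \<forall>i\<in>I. f i \<in> A i}"

definition stab :: "'a::ab_group_add set \<Rightarrow> 'a set" where
  "stab A = {g. (\<lambda>a. g + a) ` A = A}"

end

theory Submission
  imports Defs
begin


lemma sumset_finite: "finite A \<Longrightarrow> finite B \<Longrightarrow> finite (sumset A B)"
proof -
  assume "finite A" "finite B"
  have "sumset A B = (\<lambda>(a,b). a+b) ` (A \<times> B)" unfolding sumset_def by auto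
  thus ?thesis using \<open>finite A\<close> \<open>finite B\<close> by simp
qed

lemma sumset_nonempty: "A \<noteq> {} \<Longrightarrow> B \<noteq> {} \<Longrightarrow> sumset A B \<noteq> {}"
  unfolding sumset_def by auto

lemma sumset_assoc: "sumset (sumset A B) C = sumset A (sumset B C)"
proof (intro equalityI subsetI)
  fix x assume "x \<in> sumset (sumset A B) C"
  then obtain a b c where "x = (a + b) + c" "a \<in> A" "b \<in> B" "c \<in> C" unfolding sumset_def by blast
  moreover have "(a + b) + c = a + (b + c)" by (simp add: add.assoc)
  ultimately show "x \<in> sumset A (sumset B C)" unfolding sumset_def by blast
next
  fix x assume "x \<in> sumset A (sumset B C)"
  then obtain a b c where "x = a + (b + c)" "a \<in> A" "b \<in> B" "c \<in> C" unfolding sumset_def by blast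
  moreover have "x = (a + b) + c" using \<open>x = a + (b + c)\<close> by (simp add: add.assoc)
  ultimately show "x \<in> sumset (sumset A B) C" unfolding sumset_def by blast
qed

lemma sumset_swap: "sumset (sumset A B) C = sumset (sumset A C) B"
proof (intro equalityI subsetI)
  fix x assume "x \<in> sumset (sumset A B) C"
  then obtain a b c where "x = (a + b) + c" "a \<in> A" "b \<in> B" "c \<in> C" unfolding sumset_def by blast
  moreover have "(a + b) + c = (a + c) + b" by (simp add: algebra_simps)
  ultimately show "x \<in> sumset (sumset A C) B" unfolding sumset_def by blast
next
  fix x assume "x \<in> sumset (sumset A C) B"
  then obtain a b c where "x = (a + c) + b" "a \<in> A" "b \<in> B" "c \<in> C" unfolding sumset_def by blast
  moreover have "x = (a + b) + c" using \<open>x = (a + c) + b\<close> by (simp add: algebra_simps)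
  ultimately show "x \<in> sumset (sumset A B) C" unfolding sumset_def by blast
qed

lemma sumset_singleton: "sumset W {p} = (\<lambda>w. w + p) ` W"
  unfolding sumset_def by auto

lemma sumset_pair: "sumset W {p,q} = (\<lambda>w. w + p) ` W \<union> (\<lambda>w. w + q) ` W"
  unfolding sumset_def by auto

lemma sumset_fam_0: "sumset_fam A {1..0} = {0}"
  unfolding sumset_fam_def by auto

lemma sumset_fam_empty: "sumset_fam A {} = {0}"
  unfolding sumset_fam_def by auto

lemma sumset_fam_Suc: "sumset_fam A {1..Suc k} = sumset (sumset_fam A {1..k}) (A (Suc k))"
proof
  show "sumset_fam A {1..Suc k} \<subseteq> sumset (sumset_fam A {1..k}) (A (Suc k))"
  proof
    fix x assume "x \<in> sumset_fam A {1..Suc k}"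
    then obtain f where x: "x = (\<Sum>i\<in>{1..Suc k}. f i)" and f: "\<forall>i\<in>{1..Suc k}. f i \<in> A i"
      unfolding sumset_fam_def by blast
    have "x = (\<Sum>i\<in>{1..k}. f i) + f (Suc k)" using x by simp
    moreover have "(\<Sum>i\<in>{1..k}. f i) \<in> sumset_fam A {1..k}" using f unfolding sumset_fam_def by auto
    moreover have "f (Suc k) \<in> A (Suc k)" using f by simp
    ultimately show "x \<in> sumset (sumset_fam A {1..k}) (A (Suc k))" unfolding sumset_def by blast
  qed
next
  show "sumset (sumset_fam A {1..k}) (A (Suc k)) \<subseteq> sumset_fam A {1..Suc k}"
  proof
    fix x assume "x \<in> sumset (sumset_fam A {1..k}) (A (Suc k))"
    then obtain s a where x: "x = s + a" and s: "s \<in> sumset_fam A {1..k}" and a: "a \<in> A (Suc k)"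
      unfolding sumset_def by blast
    from s obtain f where s: "s = (\<Sum>i\<in>{1..k}. f i)" and f: "\<forall>i\<in>{1..k}. f i \<in> A i"
      unfolding sumset_fam_def by blast
    define g where "g = f(Suc k := a)"
    have "(\<Sum>i\<in>{1..k}. g i) = (\<Sum>i\<in>{1..k}. f i)" unfolding g_def by (rule sum.cong) auto
    moreover have "(\<Sum>i\<in>{1..Suc k}. g i) = (\<Sum>i\<in>{1..k}. g i) + g (Suc k)" by simp
    ultimately have "x = (\<Sum>i\<in>{1..Suc k}. g i)" using x s by (simp add: g_def)
    moreover have "\<forall>i\<in>{1..Suc k}. g i \<in> A i" using f a unfolding g_def by (auto simp: le_Suc_eq)
    ultimately show "x \<in> sumset_fam A {1..Suc k}" unfolding sumset_fam_def by blast
  qed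
qed

lemma image_sumset: "(\<lambda>a. g + a) ` sumset Y B = sumset ((\<lambda>a. g + a) ` Y) B"
proof (intro equalityI subsetI)
  fix x assume "x \<in> (\<lambda>a. g + a) ` sumset Y B"
  then obtain y b where "x = g + (y + b)" "y \<in> Y" "b \<in> B" unfolding sumset_def by blast
  moreover have "g + (y + b) = (g + y) + b" by (simp add: add.assoc)
  ultimately show "x \<in> sumset ((\<lambda>a. g + a) ` Y) B" unfolding sumset_def by blast
next
  fix x assume "x \<in> sumset ((\<lambda>a. g + a) ` Y) B"
  then obtain y b where "x = (g + y) + b" "y \<in> Y" "b \<in> B" unfolding sumset_def by blast
  moreover have "x = g + (y + b)" using \<open>x = (g + y) + b\<close> by (simp add: add.assoc)
  ultimately show "x \<in> (\<lambda>a. g + a) ` sumset Y B" unfolding sumset_def by blast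
qed

lemma stab_sumset: "stab Y \<subseteq> stab (sumset Y B)"
proof
  fix g assume "g \<in> stab Y"
  hence "(\<lambda>a. g + a) ` Y = Y" by (simp add: stab_def)
  hence "(\<lambda>a. g + a) ` sumset Y B = sumset Y B" by (simp add: image_sumset)
  thus "g \<in> stab (sumset Y B)" by (simp add: stab_def)
qed

lemma step2:
  fixes W :: "'a::ab_group_add set"
  assumes fin: "finite W" and per: "\<forall>h\<in>H. \<forall>w\<in>W. h + w \<in> W" and st: "stab W \<subseteq> H"
    and neg: "\<forall>h\<in>H. -h \<in> H" and e: "q - p \<notin> H"
  shows "card W + card H \<le> card (sumset W {p,q})"
proof -
  let ?e = "q - p"
  have "\<exists>w\<in>W. ?e + w \<notin> W"
  proof (rule ccontr)
    assume "\<not> ?thesis"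
    hence sub: "(\<lambda>a. ?e + a) ` W \<subseteq> W" by auto
    have "card ((\<lambda>a. ?e + a) ` W) = card W" by (rule card_image) (simp add: inj_on_def)
    hence "(\<lambda>a. ?e + a) ` W = W" using card_subset_eq[OF fin sub] by simp
    hence "?e \<in> stab W" by (simp add: stab_def)
    with st e show False by auto
  qed
  then obtain w where w: "w \<in> W" "?e + w \<notin> W" by blast
  define T where "T = (\<lambda>h. h + (w + q)) ` H"
  have T1: "T \<subseteq> (\<lambda>w. w + q) ` W"
  proof
    fix t assume "t \<in> T"
    then obtain h where h: "h \<in> H" "t = h + (w + q)" unfolding T_def by blast
    have "t = (h + w) + q" using h by (simp add: add.assoc)
    moreover have "h + w \<in> W" using per h w by blast
    ultimately show "t \<in> (\<lambda>w. w + q) ` W" by blast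
  qed
  have T2: "(\<lambda>w. w + p) ` W \<inter> T = {}"
  proof -
    { fix h w' assume h: "h \<in> H" and w': "w' \<in> W" and eq: "w' + p = h + (w + q)"
      have "?e + w = -h + (h + (w + q)) - p" by (simp add: algebra_simps)
      also have "\<dots> = -h + w'" using eq[symmetric] by (simp add: algebra_simps)
      finally have "?e + w = -h + w'" .
      moreover have "-h + w' \<in> W" using per neg h w' by blast
      ultimately have False using w by simp }
    thus ?thesis unfolding T_def by auto
  qed
  have cT: "card T = card H" unfolding T_def by (rule card_image) (simp add: inj_on_def)
  have finP: "finite ((\<lambda>w. w + p) ` W)" "finite ((\<lambda>w. w + q) ` W)" using fin by auto
  have finT: "finite T" using T1 finP(2) finite_subset by blast
  have "card W + card H = card ((\<lambda>w. w + p) ` W) + card T"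
    using cT by (simp add: card_image inj_on_def)
  also have "\<dots> = card ((\<lambda>w. w + p) ` W \<union> T)" by (rule card_Un_disjoint[symmetric]) (use finP finT T2 in auto)
  also have "\<dots> \<le> card ((\<lambda>w. w + p) ` W \<union> (\<lambda>w. w + q) ` W)"
    by (rule card_mono) (use finP T1 in auto)
  also have "\<dots> = card (sumset W {p,q})" by (simp add: sumset_pair)
  finally show ?thesis .
qed


theorem lemma3p1:
  fixes X :: "'a::ab_group_add set" and A :: "nat \<Rightarrow> 'a set" and n :: nat
  assumes "n \<ge> 1"
    and "finite X" and "X \<noteq> {}"
    and "\<forall>i\<in>{1..n}. finite (A i) \<and> A i \<noteq> {}"
    and "H = stab (sumset X (sumset_fam A {1..n}))"
    and "Z = (\<Inter>i\<in>{1..n}. sumset (A i) H)"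
    and "(\<Sum>i\<in>{1..n}. card (A i)) \<le> 2 * n"
    and "\<forall>i\<in>{1..n}. card (A i - Z) \<le> 1"
    and "card (sumset X (sumset_fam A {1..n}))
           < card (sumset X H) + ((\<Sum>i\<in>{1..n}. card (A i)) - n) * card H"
  shows "H \<noteq> {0} \<and> (\<exists>\<alpha>. Z = (\<lambda>h. \<alpha> + h) ` H)"
proof -
  define S where "S = sumset X (sumset_fam A {1..n})"
  have finF: "k \<le> n \<Longrightarrow> finite (sumset_fam A {1..k}) \<and> sumset_fam A {1..k} \<noteq> {}" for k
  proof (induction k)
    case 0 show ?case by (simp add: sumset_fam_empty)
  next
    case (Suc k)
    have a: "finite (A (Suc k)) \<and> A (Suc k) \<noteq> {}" using assms(4) Suc.prems by simp
    have ih: "finite (sumset_fam A {1..k}) \<and> sumset_fam A {1..k} \<noteq> {}" using Suc by simp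
    show ?case unfolding sumset_fam_Suc using a ih by (simp add: sumset_finite sumset_nonempty)
  qed
  have Sfin: "finite S" and Sne: "S \<noteq> {}"
    using finF[of n] assms(2,3) by (auto simp: S_def sumset_finite sumset_nonempty)
  have HS: "H = stab S" using assms(5) S_def by simp
  have H0: "0 \<in> H" by (simp add: HS stab_def)
  have Hmem: "h + s \<in> S" if "h \<in> H" "s \<in> S" for h s
  proof -
    have "(\<lambda>a. h + a) ` S = S" using that by (simp add: HS stab_def)
    moreover have "h + s \<in> (\<lambda>a. h + a) ` S" using that by blast
    ultimately show ?thesis by simp
  qed
  have Hneg: "-h \<in> H" if h: "h \<in> H" for h
  proof -
    have e: "(\<lambda>a. h + a) ` S = S" using h by (simp add: HS stab_def)
    have "(\<lambda>a. -h + a) ` S = (\<lambda>a. -h + a) ` ((\<lambda>a. h + a) ` S)" using e by simp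
    also have "\<dots> = S" by (simp add: image_image)
    finally show ?thesis by (simp add: HS stab_def)
  qed
  have Hadd: "h + h' \<in> H" if h: "h \<in> H" "h' \<in> H" for h h'
  proof -
    have e: "(\<lambda>a. h + a) ` S = S" "(\<lambda>a. h' + a) ` S = S" using h by (simp_all add: HS stab_def)
    have "(\<lambda>a. (h + h') + a) ` S = (\<lambda>a. h + a) ` ((\<lambda>a. h' + a) ` S)" by (simp add: image_image add.assoc)
    also have "\<dots> = S" using e by simp
    finally show ?thesis by (simp add: HS stab_def)
  qed
  obtain s0 where s0: "s0 \<in> S" using Sne by blast
  have "H \<subseteq> (\<lambda>s. s - s0) ` S"
  proof
    fix h assume "h \<in> H"
    hence "h + s0 \<in> S" using Hmem s0 by blast
    moreover have "h = (h + s0) - s0" by simp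
    ultimately show "h \<in> (\<lambda>s. s - s0) ` S" by blast
  qed
  hence Hfin: "finite H" using Sfin finite_subset by blast
  define W where "W k = sumset (sumset X H) (sumset_fam A {1..k})" for k
  have W0: "W 0 = sumset X H" by (simp add: W_def sumset_fam_empty sumset_singleton)
  have WSuc: "W (Suc k) = sumset (W k) (A (Suc k))" for k
    unfolding W_def sumset_fam_Suc by (rule sumset_assoc[symmetric])
  have SH: "sumset S H = S"
  proof (intro equalityI subsetI)
    fix x assume "x \<in> sumset S H"
    then obtain s h where "x = s + h" "s \<in> S" "h \<in> H" unfolding sumset_def by blast
    thus "x \<in> S" using Hmem by (simp add: add.commute)
  next
    fix x assume "x \<in> S"
    moreover have "x = x + 0" by simp
    ultimately show "x \<in> sumset S H" using H0 unfolding sumset_def by blast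
  qed
  have Wn: "W n = S" using SH by (simp add: W_def sumset_swap S_def)
  have Wfin: "k \<le> n \<Longrightarrow> finite (W k)" for k
  proof (induction k)
    case 0 show ?case using assms(2) Hfin by (simp add: W0 sumset_finite)
  next
    case (Suc k)
    have "finite (A (Suc k))" using assms(4) Suc.prems by simp
    thus ?case using Suc by (simp add: WSuc sumset_finite)
  qed
  have Wper: "\<forall>h\<in>H. \<forall>w\<in>W k. h + w \<in> W k" for k
  proof (intro ballI)
    fix h w assume h: "h \<in> H" and w: "w \<in> W k"
    then obtain x h' f where xf: "w = (x + h') + f" "x \<in> X" "h' \<in> H" "f \<in> sumset_fam A {1..k}"
      unfolding W_def sumset_def by blast
    have "h + w = (x + (h + h')) + f" using xf(1) by (simp add: algebra_simps)
    moreover have "h + h' \<in> H" using Hadd h xf(3) by blast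
    ultimately show "h + w \<in> W k" using xf unfolding W_def sumset_def by blast
  qed
  have Wmono: "stab (W k) \<subseteq> stab (W (k + d))" for k d
  proof (induction d)
    case 0 show ?case by simp
  next
    case (Suc d)
    have "stab (W (k + d)) \<subseteq> stab (W (Suc (k + d)))"
      using stab_sumset[of "W (k+d)" "A (Suc (k+d))"] by (simp add: WSuc)
    thus ?case using Suc by simp
  qed
  have Wstab: "stab (W k) \<subseteq> H" if "k \<le> n" for k
    using Wmono[of k "n - k"] that Wn HS by simp
  define good where "good i \<longleftrightarrow> (\<exists>p. A i = {p}) \<or> (\<exists>p q. A i = {p,q} \<and> q - p \<notin> H)" for i
  have key: False if g: "\<forall>i\<in>{1..n}. good i"
  proof -
    have ind: "k \<le> n \<Longrightarrow> card (sumset X H) + (\<Sum>i=1..k. card (A i) - 1) * card H \<le> card (W k)" for k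
    proof (induction k)
      case 0 show ?case by (simp add: W0)
    next
      case (Suc k)
      have IH: "card (sumset X H) + (\<Sum>i=1..k. card (A i) - 1) * card H \<le> card (W k)"
        using Suc by simp
      have kn: "k \<le> n" using Suc.prems by simp
      have gk: "good (Suc k)" using g Suc.prems by simp
      have st: "card (W k) + (card (A (Suc k)) - 1) * card H \<le> card (W (Suc k))"
      proof (cases "\<exists>p. A (Suc k) = {p}")
        case True
        then obtain p where p: "A (Suc k) = {p}" by blast
        have "card (W (Suc k)) = card (W k)"
          by (simp add: WSuc p sumset_singleton card_image inj_on_def)
        thus ?thesis using p by simp
      next
        case False
        then obtain p q where pq: "A (Suc k) = {p,q}" "q - p \<notin> H" using gk good_def by auto
        have "p \<noteq> q" using pq(2) H0 by auto
        hence "card (A (Suc k)) - 1 = 1" using pq by simp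
        moreover have "card (W k) + card H \<le> card (sumset (W k) {p,q})"
          by (rule step2) (use Wfin[OF kn] Wper Wstab[OF kn] Hneg pq(2) in auto)
        ultimately show ?thesis by (simp add: WSuc pq)
      qed
      have "(\<Sum>i=1..Suc k. card (A i) - 1) = (\<Sum>i=1..k. card (A i) - 1) + (card (A (Suc k)) - 1)"
        by simp
      hence "(\<Sum>i=1..Suc k. card (A i) - 1) * card H = (\<Sum>i=1..k. card (A i) - 1) * card H + (card (A (Suc k)) - 1) * card H"
        by (simp add: add_mult_distrib)
      thus ?case using IH st by linarith
    qed
    have c1: "\<forall>i\<in>{1..n}. 1 \<le> card (A i)" using assms(4) by (simp add: Suc_le_eq card_gt_0_iff)
    have "(\<Sum>i=1..n. card (A i) - 1) = (\<Sum>i=1..n. card (A i)) - (\<Sum>i=1..n. (1::nat))"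
      by (rule sum_subtractf_nat) (use c1 in auto)
    hence "(\<Sum>i=1..n. card (A i) - 1) = (\<Sum>i=1..n. card (A i)) - n" by simp
    with ind[of n] Wn have "card (sumset X H) + ((\<Sum>i=1..n. card (A i)) - n) * card H \<le> card S" by simp
    thus False using assms(9) S_def by simp
  qed
  have Zsub: "\<exists>p\<in>A i. \<exists>h\<in>H. z = p + h" if "i \<in> {1..n}" "z \<in> Z" for i z
    using that assms(6) unfolding sumset_def by blast
  show ?thesis
  proof (cases "\<exists>u\<in>Z. \<exists>v\<in>Z. v - u \<notin> H")
    case True
    then obtain u v where uv: "u \<in> Z" "v \<in> Z" "v - u \<notin> H" by blast
    have two: "\<exists>p\<in>A i. \<exists>q\<in>A i. q - p \<notin> H" if i: "i \<in> {1..n}" for i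
    proof -
      obtain p h where p: "p \<in> A i" "h \<in> H" "u = p + h" using Zsub[OF i uv(1)] by blast
      obtain q h' where q: "q \<in> A i" "h' \<in> H" "v = q + h'" using Zsub[OF i uv(2)] by blast
      have "q - p \<notin> H"
      proof
        assume qp: "q - p \<in> H"
        have "v - u = (q - p) + (h' + - h)" using p(3) q(3) by (simp add: algebra_simps)
        moreover have "(q - p) + (h' + - h) \<in> H" using Hadd Hneg qp p(2) q(2) by blast
        ultimately show False using uv(3) by simp
      qed
      thus ?thesis using p q by blast
    qed
    have sub2: "\<exists>p q. {p,q} \<subseteq> A i \<and> q - p \<notin> H \<and> card {p,q} = 2" if i: "i \<in> {1..n}" for i
    proof -
      obtain p q where "p \<in> A i" "q \<in> A i" "q - p \<notin> H" using two[OF i] by blast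
      moreover have "p \<noteq> q" using \<open>q - p \<notin> H\<close> H0 by auto
      hence "card {p,q} = 2" by simp
      ultimately show ?thesis by blast
    qed
    have ge2: "2 \<le> card (A i)" if i: "i \<in> {1..n}" for i
    proof -
      obtain p q where pq: "{p,q} \<subseteq> A i" "card {p,q} = 2" using sub2[OF i] by blast
      have "finite (A i)" using assms(4) i by blast
      thus ?thesis using card_mono[OF _ pq(1)] pq(2) by simp
    qed
    have eq2: "card (A i) = 2" if i: "i \<in> {1..n}" for i
    proof (rule ccontr)
      assume "card (A i) \<noteq> 2"
      hence lt: "2 < card (A i)" using ge2[OF i] by simp
      have "(\<Sum>j\<in>{1..n}. (2::nat)) < (\<Sum>j\<in>{1..n}. card (A j))"
        by (rule sum_strict_mono_ex1) (use ge2 i lt in auto)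
      thus False using assms(7) by simp
    qed
    have "\<forall>i\<in>{1..n}. good i"
    proof
      fix i assume i: "i \<in> {1..n}"
      obtain p q where pq: "{p,q} \<subseteq> A i" "q - p \<notin> H" "card {p,q} = 2" using sub2[OF i] by blast
      have "finite (A i)" using assms(4) i by blast
      hence "{p,q} = A i" using card_subset_eq[OF _ pq(1)] pq(3) eq2[OF i] by simp
      thus "good i" using pq(2) unfolding good_def by metis
    qed
    with key show ?thesis by blast
  next
    case False
    hence sameH: "\<forall>u\<in>Z. \<forall>v\<in>Z. v - u \<in> H" by blast
    show ?thesis
    proof (cases "Z = {}")
      case True
      have "\<forall>i\<in>{1..n}. good i"
      proof
        fix i assume i: "i \<in> {1..n}"
        have "card (A i) \<le> 1" using assms(8) i True by auto
        moreover have "card (A i) \<noteq> 0" using assms(4) i by auto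
        ultimately have "card (A i) = 1" by simp
        then obtain p where "A i = {p}" by (meson card_1_singletonE)
        thus "good i" unfolding good_def by blast
      qed
      with key show ?thesis by blast
    next
      case False
      then obtain \<alpha> where \<alpha>: "\<alpha> \<in> Z" by blast
      have Zeq: "Z = (\<lambda>h. \<alpha> + h) ` H"
      proof (intro equalityI subsetI)
        fix v assume v: "v \<in> Z"
        hence "v - \<alpha> \<in> H" using sameH \<alpha> by blast
        moreover have "v = \<alpha> + (v - \<alpha>)" by simp
        ultimately show "v \<in> (\<lambda>h. \<alpha> + h) ` H" by blast
      next
        fix x assume "x \<in> (\<lambda>h. \<alpha> + h) ` H"
        then obtain h where h: "h \<in> H" "x = \<alpha> + h" by blast
        have "x \<in> sumset (A i) H" if i: "i \<in> {1..n}" for i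
        proof -
          obtain p h' where p: "p \<in> A i" "h' \<in> H" "\<alpha> = p + h'" using Zsub[OF i \<alpha>] by blast
          have "x = p + (h' + h)" using h(2) p(3) by (simp add: add.assoc)
          moreover have "h' + h \<in> H" using Hadd p(2) h(1) by blast
          ultimately show ?thesis using p(1) unfolding sumset_def by blast
        qed
        thus "x \<in> Z" using assms(6) by blast
      qed
      show ?thesis
      proof (cases "H = {0}")
        case False with Zeq show ?thesis by blast
      next
        case True
        have Z1: "Z = {\<alpha>}" using Zeq True by simp
        have "\<forall>i\<in>{1..n}. good i"
        proof
          fix i assume i: "i \<in> {1..n}"
          have c: "card (A i - {\<alpha>}) \<le> 1" using assms(8) i Z1 by auto
          have fin: "finite (A i)" "A i \<noteq> {}" using assms(4) i by auto
          show "good i"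
          proof (cases "A i - {\<alpha>} = {}")
            case True
            hence "A i = {\<alpha>}" using fin(2) by blast
            thus ?thesis unfolding good_def by blast
          next
            case False
            hence "card (A i - {\<alpha>}) \<noteq> 0" using fin(1) by simp
            hence "card (A i - {\<alpha>}) = 1" using c by simp
            then obtain b where b: "A i - {\<alpha>} = {b}" by (meson card_1_singletonE)
            show ?thesis
            proof (cases "\<alpha> \<in> A i")
              case True
              hence "A i = {\<alpha>, b}" using b by blast
              moreover have "b - \<alpha> \<notin> H" using b True \<open>H = {0}\<close> by auto
              ultimately show ?thesis unfolding good_def by blast
            next
              case False
              hence "A i = {b}" using b by blast
              thus ?thesis unfolding good_def by blast
            qed
          qed
        qed
        with key show ?thesis by blast
      qed
    qed
  qed
qed

end
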